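(* Let $P=\frac{1}{\sqrt2}\begin{bmatrix}1&1\\0&0\end{bmatrix}$ and $Q=\frac{1}{\sqrt2}\begin{bmatrix}0&0\\1&-1\end{bmatrix}$. For $\varphi=\begin{bmatrix}\alpha\\ \beta\end{bmatrix}\in\mathbb{C}^2$ with $|\alpha|^2+|\beta|^2=1$, define $\Psi^{(n)}_k(\varphi)\in\mathbb{C}^2$ ($n\in\mathbb{Z}_+$, $k\in\mathbb{Z}$) by $\Psi^{(0)}_0(\varphi)=\varphi$, $\Psi^{(0)}_k(\varphi)=0$ for $k\ne0$, and $\Psi^{(n+1)}_k(\varphi)=Q\Psi^{(n)}_{k-1}(\varphi)+P\Psi^{(n)}_{k+1}(\varphi)$, and let $X^\varphi_n$ be the $\mathbb{Z}$-valued random variable with $P(X^\varphi_n=k)=|\Psi^{(n)}_k(\varphi)|^2$ (Euclidean norm). Let $\Phi$ be the set of such unit vectors $\varphi$ and define $\Phi_\perp=\{\varphi=(\alpha,\beta)^t\in\Phi: |\alpha|=|\beta|,\ \alpha\bar\beta+\bar\alpha\beta=0\}$, $\Phi_s=\{\varphi\in\Phi: P(X^\varphi_n=k)=P(X^\varphi_n=-k)\text{ for all } n\in\mathbb{Z}_+,\ k\in\mathbb{Z}\}$, $\Phi_0=\{\varphi\in\Phi: E(X^\varphi_n)=0\text{ for all } n\in\mathbb{Z}_+\}$. Then $\Phi_\perp=\Phi_s=\Phi_0$.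
   Context: This is the one-dimensional Hadamard walk with Hadamard matrix $H=\frac{1}{\sqrt2}\begin{bmatrix}1&1\\1&-1\end{bmatrix}=P+Q$; the upper/lower component of $\Psi^{(n)}_k$ is the amplitude of left/right chirality at site $k$ at time $n$, and $\sum_k|\Psi^{(n)}_k(\varphi)|^2=1$. $\mathbb{Z}_+$ denotes the non-negative integers and $E(X^\varphi_n)=\sum_k k\,P(X^\varphi_n=k)$. (The paper realizes the walk on a large cycle of $2N+1$ sites; for the times considered this coincides with the walk on $\mathbb{Z}$.) *)

theory Defs
  imports "HOL-Analysis.Analysis"
begin

text \<open>Vectors in C^2 are pairs (upper component, lower component).
  A 2x2 matrix [[m11,m12],[m21,m22]] acts by matrix-vector product.\<close>

definition mat2_apply ::
  "complex \<Rightarrow> complex \<Rightarrow> complex \<Rightarrow> complex \<Rightarrow> complex \<times> complex \<Rightarrow> complex \<times> complex" where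
  "mat2_apply m11 m12 m21 m22 v = (m11 * fst v + m12 * snd v, m21 * fst v + m22 * snd v)"

definition Pmat :: "complex \<times> complex \<Rightarrow> complex \<times> complex" where
  "Pmat = mat2_apply (1 / sqrt 2) (1 / sqrt 2) 0 0"

definition Qmat :: "complex \<times> complex \<Rightarrow> complex \<times> complex" where
  "Qmat = mat2_apply 0 0 (1 / sqrt 2) (- 1 / sqrt 2)"

definition vadd :: "complex \<times> complex \<Rightarrow> complex \<times> complex \<Rightarrow> complex \<times> complex" where
  "vadd u v = (fst u + fst v, snd u + snd v)"

fun Psi :: "complex \<times> complex \<Rightarrow> nat \<Rightarrow> int \<Rightarrow> complex \<times> complex" where
  "Psi \<phi> 0 k = (if k = 0 then \<phi> else (0, 0))"
| "Psi \<phi> (Suc n) k = vadd (Qmat (Psi \<phi> n (k - 1))) (Pmat (Psi \<phi> n (k + 1)))"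

definition prob_walk :: "complex \<times> complex \<Rightarrow> nat \<Rightarrow> int \<Rightarrow> real" where
  "prob_walk \<phi> n k = (cmod (fst (Psi \<phi> n k)))\<^sup>2 + (cmod (snd (Psi \<phi> n k)))\<^sup>2"

definition expect_walk :: "complex \<times> complex \<Rightarrow> nat \<Rightarrow> real" where
  "expect_walk \<phi> n = (\<Sum>\<^sub>\<infinity>k::int. real_of_int k * prob_walk \<phi> n k)"

definition Phi :: "(complex \<times> complex) set" where
  "Phi = {\<phi>. (cmod (fst \<phi>))\<^sup>2 + (cmod (snd \<phi>))\<^sup>2 = 1}"

definition Phi_perp :: "(complex \<times> complex) set" where
  "Phi_perp = {\<phi> \<in> Phi. cmod (fst \<phi>) = cmod (snd \<phi>) \<and>
      fst \<phi> * cnj (snd \<phi>) + cnj (fst \<phi>) * snd \<phi> = 0}"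

definition Phi_s :: "(complex \<times> complex) set" where
  "Phi_s = {\<phi> \<in> Phi. \<forall>n k. prob_walk \<phi> n k = prob_walk \<phi> n (- k)}"

definition Phi_0 :: "(complex \<times> complex) set" where
  "Phi_0 = {\<phi> \<in> Phi. \<forall>n. expect_walk \<phi> n = 0}"

end

theory Submission imports Defs begin
definition Sv :: "complex \<times> complex \<Rightarrow> complex \<times> complex" where "Sv v = (snd v, - fst v)"
definition sm :: "complex \<Rightarrow> complex \<times> complex \<Rightarrow> complex \<times> complex" where "sm c v = (c * fst v, c * snd v)"

lemma Psi_sm: "Psi (sm c \<phi>) n k = sm c (Psi \<phi> n k)"
  by (induction n arbitrary: k) (auto simp: sm_def vadd_def Pmat_def Qmat_def mat2_apply_def algebra_simps)

lemma Psi_S: "Psi (Sv \<phi>) n k = sm ((-1)^n) (Sv (Psi \<phi> n (-k)))"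
proof (induction n arbitrary: k)
  case 0 then show ?case by (auto simp: sm_def Sv_def)
next
  case (Suc n)
  have a: "- (k - 1) = -k + 1" "-(k+1) = -k - 1" by simp_all
  show ?case using Suc[of "k-1"] Suc[of "k+1"] unfolding a
    by (simp add: sm_def Sv_def vadd_def Pmat_def Qmat_def mat2_apply_def algebra_simps)
qed

lemma Psi_supp: "\<bar>k\<bar> > int n \<Longrightarrow> Psi \<phi> n k = (0,0)"
  by (induction n arbitrary: k) (auto simp: vadd_def Pmat_def Qmat_def mat2_apply_def)

lemma prob_sm: "cmod c = 1 \<Longrightarrow> prob_walk (sm c \<phi>) n k = prob_walk \<phi> n k"
  by (simp only: prob_walk_def Psi_sm) (simp add: sm_def norm_mult power_mult_distrib)

lemma prob_S: "prob_walk (Sv \<phi>) n k = prob_walk \<phi> n (-k)"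
  by (simp only: prob_walk_def Psi_S) (simp add: sm_def Sv_def norm_mult norm_power)

lemma perp_s: "Phi_perp \<subseteq> Phi_s"
proof
  fix \<phi> assume h: "\<phi> \<in> Phi_perp"
  obtain a b where ab: "\<phi> = (a,b)" by fastforce
  have u: "(cmod a)\<^sup>2 + (cmod b)\<^sup>2 = 1" and e: "cmod a = cmod b" and r: "a * cnj b + cnj a * b = 0"
    using h ab by (auto simp: Phi_perp_def Phi_def)
  have b0: "b \<noteq> 0" using u e by auto
  have a0: "a \<noteq> 0" using b0 e by auto
  define c where "c = a / b"
  have c1: "cmod c = 1" using e b0 by (simp add: c_def norm_divide)
  have aa: "a * cnj a = b * cnj b" using e by (metis complex_norm_square)
  have "a * cnj b = - (cnj a * b)" using r by (simp add: eq_neg_iff_add_eq_0)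
  hence "a * cnj b * b = - (cnj a * b) * b" by simp
  hence "a * (b * cnj b) = - cnj a * b * b" by (simp add: algebra_simps)
  hence "a * a * cnj a = - cnj a * b * b" using aa by (simp add: algebra_simps)
  hence "(a * a + b * b) * cnj a = 0" by (simp add: algebra_simps)
  hence sqt: "a * a = - b * b" using a0 by (simp add: add_eq_0_iff)
  have c2: "c * b = a" by (simp add: c_def b0)
  have "c * a = a * a / b" by (simp add: c_def)
  also have "\<dots> = - b" using sqt b0 by (simp add: power2_eq_square)
  finally have c3: "c * a = - b" .
  have phi: "\<phi> = sm c (Sv \<phi>)"
    using ab c2 c3 by (simp add: sm_def Sv_def)
  have "prob_walk \<phi> n k = prob_walk \<phi> n (-k)" for n k
    by (subst phi, simp add: prob_sm[OF c1] prob_S)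
  thus "\<phi> \<in> Phi_s" using h by (auto simp: Phi_s_def Phi_perp_def)
qed

lemma s_0: "Phi_s \<subseteq> Phi_0"
proof
  fix \<phi> assume h: "\<phi> \<in> Phi_s"
  have "expect_walk \<phi> n = 0" for n
  proof -
    define f where "f = (\<lambda>k::int. real_of_int k * prob_walk \<phi> n k)"
    have pk: "prob_walk \<phi> n k = prob_walk \<phi> n (-k)" for k using h unfolding Phi_s_def by blast
    have odd: "f \<circ> uminus = (\<lambda>k. - f k)"
    proof
      fix k show "(f \<circ> uminus) k = - f k" using pk[of k] by (simp add: f_def)
    qed
    have su: "uminus ` (UNIV::int set) = UNIV" by (metis minus_minus surjI)
    have "infsum f UNIV = infsum f (uminus ` UNIV)" by (simp only: su)
    also have "\<dots> = infsum (f \<circ> uminus) UNIV" by (rule infsum_reindex) simp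
    also have "\<dots> = - infsum f UNIV" unfolding odd by (rule infsum_uminus)
    finally show ?thesis by (simp add: expect_walk_def f_def)
  qed
  thus "\<phi> \<in> Phi_0" using h by (auto simp: Phi_0_def Phi_s_def)
qed
lemma expect_fin: "expect_walk \<phi> n = (\<Sum>k\<in>{-int n..int n}. real_of_int k * prob_walk \<phi> n k)"
proof -
  have "expect_walk \<phi> n = infsum (\<lambda>k. real_of_int k * prob_walk \<phi> n k) {-int n..int n}"
    unfolding expect_walk_def
    by (rule infsum_cong_neutral) (auto simp: prob_walk_def Psi_supp)
  thus ?thesis by simp
qed

lemma E1: "expect_walk (a,b) 1 = - 2 * (Re a * Re b + Im a * Im b)"
proof -
  have s: "{-int 1..int 1} = {-1,0,1}" by auto
  show ?thesis unfolding expect_fin s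
    by (simp add: prob_walk_def vadd_def Pmat_def Qmat_def mat2_apply_def cmod_power2 Re_divide_of_real Im_divide_of_real power_divide)
       (simp add: power2_eq_square field_simps)
qed
abbreviation "sqt \<equiv> complex_of_real (sqrt 2)"
lemma sqtsqt: "sqt * sqt = 2"
  by (simp flip: of_real_mult)
lemmas U = vadd_def Pmat_def Qmat_def mat2_apply_def
lemma P1: "Psi (a,b) 1 (-1) = ((a+b)/sqt, 0)" "Psi (a,b) 1 1 = (0, (a-b)/sqt)"
  "k \<noteq> 1 \<Longrightarrow> k \<noteq> -1 \<Longrightarrow> Psi (a,b) 1 k = (0,0)"
  by (simp_all add: U add_divide_distrib diff_divide_distrib)
lemma Psi_step: "Psi \<phi> (n + 1) k = vadd (Qmat (Psi \<phi> n (k - 1))) (Pmat (Psi \<phi> n (k + 1)))"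
  by simp
lemma two3: "(2::nat) = 1 + 1" "(3::nat) = 2 + 1" by simp_all
lemma P2: "Psi (a,b) 2 (-2) = ((a+b)/2, 0)" "Psi (a,b) 2 0 = ((a-b)/2, (a+b)/2)"
  "Psi (a,b) 2 2 = (0, (b-a)/2)"
  "k \<noteq> 2 \<Longrightarrow> k \<noteq> -2 \<Longrightarrow> k \<noteq> 0 \<Longrightarrow> Psi (a,b) 2 k = (0,0)"
  by (simp_all only: two3(1) Psi_step)
     (simp_all add: P1 U field_simps sqtsqt)
lemma P3: "Psi (a,b) 3 (-3) = ((a+b)/(2 * sqt), 0)" "Psi (a,b) 3 (-1) = (a/sqt, (a+b)/(2 * sqt))"
  "Psi (a,b) 3 1 = ((b-a)/(2 * sqt), -b/sqt)" "Psi (a,b) 3 3 = (0, (a-b)/(2 * sqt))"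
  "Psi (a,b) 3 (-2) = (0,0)" "Psi (a,b) 3 2 = (0,0)"
  by (simp_all only: two3(2) Psi_step)
     (simp_all add: P2 U field_simps sqtsqt)

lemma nsq: "(cmod (z / (c * sqt)))\<^sup>2 = ((Re z)\<^sup>2 + (Im z)\<^sup>2) / (2 * (cmod c)\<^sup>2)"
  by (simp add: norm_divide norm_mult power_divide power_mult_distrib cmod_power2)

lemma E3: "expect_walk (a,b) 3 = - 2 * (Re a * Re b + Im a * Im b) + ((Re b)\<^sup>2 + (Im b)\<^sup>2 - (Re a)\<^sup>2 - (Im a)\<^sup>2) / 2"
proof -
  have s: "{-int 3..int 3} = {-3,-2,-1,0,1,2,3}" by auto
  have n1: "(cmod (z / sqt))\<^sup>2 = ((Re z)\<^sup>2 + (Im z)\<^sup>2) / 2" for z using nsq[of z 1] by simp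
  show ?thesis unfolding expect_fin s
    by (simp add: prob_walk_def P3 nsq n1) (simp add: power2_eq_square field_simps)
qed

lemma zero_perp: "Phi_0 \<subseteq> Phi_perp"
proof
  fix \<phi> assume h: "\<phi> \<in> Phi_0"
  obtain a b where ab: "\<phi> = (a,b)" by fastforce
  have e1: "expect_walk (a,b) 1 = 0" and e3: "expect_walk (a,b) 3 = 0" using h ab unfolding Phi_0_def by auto
  have r: "Re a * Re b + Im a * Im b = 0" using e1 unfolding E1 by simp
  have q: "(Re b)\<^sup>2 + (Im b)\<^sup>2 = (Re a)\<^sup>2 + (Im a)\<^sup>2"
    using e3 unfolding E3 r by simp
  have "cmod a = cmod b" using q by (simp add: cmod_def)
  moreover have "a * cnj b + cnj a * b = 0" using r
    by (simp add: complex_eq_iff algebra_simps)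
  ultimately show "\<phi> \<in> Phi_perp" using h ab by (simp add: Phi_perp_def Phi_0_def)
qed

theorem theorem2:
  shows "Phi_perp = Phi_s \<and> Phi_s = Phi_0"
  using perp_s s_0 zero_perp by blast
end
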